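(* Consider an $N$-agent Markov decision process with finite state space $\mathcal{S}$, finite individual action spaces $\mathcal{A}^i$, joint action space $\mathcal{A}=\prod_{i=1}^N\mathcal{A}^i$, bounded individual rewards and discount factor $\gamma\in(0,1)$. Let $\pi^{ii}_{old},\pi^{ii}_{new}$ ($i=1,\dots,N$) be individual policies, $\boldsymbol{\pi}_{old}(\boldsymbol{a}|s)=\prod_i\pi^{ii}_{old}(a^i|s)$ and $\boldsymbol{\pi}_{new}(\boldsymbol{a}|s)=\prod_i\pi^{ii}_{new}(a^i|s)$, and let $\boldsymbol{\tilde{\Pi}}_{new}=(\boldsymbol{\tilde{\pi}}^1_{new},\dots,\boldsymbol{\tilde{\pi}}^N_{new})$ with $\boldsymbol{\tilde{\pi}}^i_{new}(\boldsymbol{a}|s)=\prod_{j}\pi^{ij}_{new}(a^j|s)$, where for $j\neq i$ the $\pi^{ij}_{new}$ are arbitrary policies for agent $j$. Then $$\eta(\boldsymbol{\pi}_{new}) \geq \eta(\boldsymbol{\pi}_{old}) + \zeta_{\boldsymbol{\pi}_{old}}(\boldsymbol{\tilde{\Pi}}_{new}) - C \sum_{i=1}^N D_{KL}^{max}(\pi^{ii}_{old} \,\|\, \pi^{ii}_{new}) - f^{\boldsymbol{\pi}_{old}} - \sum_{i=1}^N \frac{1}{2} \max_{s, \boldsymbol{a}} \big| A_i^{\boldsymbol{\pi}_{old}}(s, \boldsymbol{a}) \big| \cdot \sum_{s, \boldsymbol{a}}\big(\boldsymbol{\tilde{\pi}}^i_{new}(\boldsymbol{a}|s) - \boldsymbol{\pi}_{new}(\boldsymbol{a}|s)\big)^2,$$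 where $C = \frac{4\gamma \max_{s, \boldsymbol{a}}|\sum_{i} A_i^{\boldsymbol{\pi}_{old}}(s, \boldsymbol{a})|}{(1-\gamma)^2}$, $D_{KL}^{max}(\pi^{ii}_{old}\|\pi^{ii}_{new})=\max_s D_{KL}(\pi^{ii}_{old}(\cdot|s)\|\pi^{ii}_{new}(\cdot|s))$, and $f^{\boldsymbol{\pi}_{old}} = \sum_{i} \frac{1}{2} \max_{s, \boldsymbol{a}} | A_i^{\boldsymbol{\pi}_{old}}(s, \boldsymbol{a}) | \cdot |\mathcal{A}| \cdot \sum_s (d^{\boldsymbol{\pi}_{old}}(s))^2$.
   Context: Trajectories under a joint policy $\boldsymbol{\pi}$ are generated by $s_0\sim d(s_0)$, $\boldsymbol{a}_t\sim\boldsymbol{\pi}(\cdot|s_t)$, $s_{t+1}\sim\mathcal{P}(\cdot|s_t,\boldsymbol{a}_t)$, rewards $r_t^i=\mathcal{R}^i(s_t,\boldsymbol{a}_t)$. The collective objective is $\eta(\boldsymbol{\pi})=\sum_{i=1}^N\mathbb{E}_{\tau\sim\boldsymbol{\pi}}[\sum_{t\ge0}\gamma^tr^i_t]$. Individual value functions $V_i^{\boldsymbol{\pi}}(s)=\mathbb{E}[\sum_{t\ge0}\gamma^t r^i_t\mid s_0=s]$, $Q_i^{\boldsymbol{\pi}}(s,\boldsymbol{a})=\mathbb{E}[\sum_{t\ge0}\gamma^t r^i_t\mid s_0=s,\boldsymbol{a}_0=\boldsymbol{a}]$, advantage $A_i^{\boldsymbol{\pi}}=Q_i^{\boldsymbol{\pi}}-V_i^{\boldsymbol{\pi}}$.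 State visitation distribution $d^{\boldsymbol{\pi}}(s)=\sum_{t\ge0}\gamma^tP(s_t=s\mid\boldsymbol{\pi})$. For a collection of suggesting joint policies $\boldsymbol{\tilde{\Pi}}=(\boldsymbol{\tilde{\pi}}^1,\dots,\boldsymbol{\tilde{\pi}}^N)$, $\zeta_{\boldsymbol{\pi}'}(\boldsymbol{\tilde{\Pi}})=\sum_{i}\sum_s d^{\boldsymbol{\pi}'}(s)\sum_{\boldsymbol{a}}\boldsymbol{\tilde{\pi}}^i(\boldsymbol{a}|s)A_i^{\boldsymbol{\pi}'}(s,\boldsymbol{a})$. *)

theory Defs
  imports Complex_Main
begin

text \<open>Multi-agent MDP with agent type 'i (finite), finite state type 's,
  actions of agent i drawn from the finite set Act i (subset of a common type 'a),
  joint actions = functions 'i => 'a with a i in Act i.\<close>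

definition jointActs :: "('i \<Rightarrow> 'a set) \<Rightarrow> ('i \<Rightarrow> 'a) set" where
  "jointActs Act = {a. \<forall>i. a i \<in> Act i}"

definition is_policy :: "'b set \<Rightarrow> ('s \<Rightarrow> 'b \<Rightarrow> real) \<Rightarrow> bool" where
  "is_policy A p \<longleftrightarrow> (\<forall>s. (\<forall>a\<in>A. 0 \<le> p s a) \<and> (\<Sum>a\<in>A. p s a) = 1)"

definition prod_policy :: "('i::finite \<Rightarrow> 's \<Rightarrow> 'a \<Rightarrow> real) \<Rightarrow> 's \<Rightarrow> ('i \<Rightarrow> 'a) \<Rightarrow> real" where
  "prod_policy p s a = (\<Prod>i\<in>UNIV. p i s (a i))"

fun state_dist :: "('s::finite \<Rightarrow> 'b \<Rightarrow> 's \<Rightarrow> real) \<Rightarrow> 'b set \<Rightarrow> ('s \<Rightarrow> 'b \<Rightarrow> real)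
    \<Rightarrow> ('s \<Rightarrow> real) \<Rightarrow> nat \<Rightarrow> 's \<Rightarrow> real" where
  "state_dist P JA pol mu 0 = mu"
| "state_dist P JA pol mu (Suc t) =
     (\<lambda>s'. \<Sum>s\<in>UNIV. \<Sum>a\<in>JA. state_dist P JA pol mu t s * pol s a * P s a s')"

definition exp_reward :: "('s::finite \<Rightarrow> 'b \<Rightarrow> 's \<Rightarrow> real) \<Rightarrow> 'b set \<Rightarrow> ('s \<Rightarrow> 'b \<Rightarrow> real)
    \<Rightarrow> ('s \<Rightarrow> 'b \<Rightarrow> real) \<Rightarrow> ('s \<Rightarrow> real) \<Rightarrow> nat \<Rightarrow> real" where
  "exp_reward P JA pol Ri mu t =
     (\<Sum>s\<in>UNIV. state_dist P JA pol mu t s * (\<Sum>a\<in>JA. pol s a * Ri s a))"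

definition Vfun :: "('s::finite \<Rightarrow> 'b \<Rightarrow> 's \<Rightarrow> real) \<Rightarrow> 'b set \<Rightarrow> real \<Rightarrow> ('s \<Rightarrow> 'b \<Rightarrow> real)
    \<Rightarrow> ('s \<Rightarrow> 'b \<Rightarrow> real) \<Rightarrow> 's \<Rightarrow> real" where
  "Vfun P JA g pol Ri s =
     (\<Sum>t. g ^ t * exp_reward P JA pol Ri (\<lambda>s'. if s' = s then 1 else 0) t)"

text \<open>Q_i(s,a) = E[sum_t gamma^t r^i_t | s_0 = s, a_0 = a]: the t = 0 term is Ri s a,
  and for t >= 1 the state s_1 is distributed as P s a.\<close>
definition Qfun :: "('s::finite \<Rightarrow> 'b \<Rightarrow> 's \<Rightarrow> real) \<Rightarrow> 'b set \<Rightarrow> real \<Rightarrow> ('s \<Rightarrow> 'b \<Rightarrow> real)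
    \<Rightarrow> ('s \<Rightarrow> 'b \<Rightarrow> real) \<Rightarrow> 's \<Rightarrow> 'b \<Rightarrow> real" where
  "Qfun P JA g pol Ri s a =
     Ri s a + (\<Sum>t. g ^ Suc t * exp_reward P JA pol Ri (P s a) t)"

definition Adv :: "('s::finite \<Rightarrow> 'b \<Rightarrow> 's \<Rightarrow> real) \<Rightarrow> 'b set \<Rightarrow> real \<Rightarrow> ('s \<Rightarrow> 'b \<Rightarrow> real)
    \<Rightarrow> ('s \<Rightarrow> 'b \<Rightarrow> real) \<Rightarrow> 's \<Rightarrow> 'b \<Rightarrow> real" where
  "Adv P JA g pol Ri s a = Qfun P JA g pol Ri s a - Vfun P JA g pol Ri s"

definition eta :: "('s::finite \<Rightarrow> 'b \<Rightarrow> 's \<Rightarrow> real) \<Rightarrow> 'b set \<Rightarrow> real \<Rightarrow> ('s \<Rightarrow> real)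
    \<Rightarrow> ('i::finite \<Rightarrow> 's \<Rightarrow> 'b \<Rightarrow> real) \<Rightarrow> ('s \<Rightarrow> 'b \<Rightarrow> real) \<Rightarrow> real" where
  "eta P JA g d0 R pol = (\<Sum>i\<in>UNIV. \<Sum>t. g ^ t * exp_reward P JA pol (R i) d0 t)"

definition visit :: "('s::finite \<Rightarrow> 'b \<Rightarrow> 's \<Rightarrow> real) \<Rightarrow> 'b set \<Rightarrow> real \<Rightarrow> ('s \<Rightarrow> real)
    \<Rightarrow> ('s \<Rightarrow> 'b \<Rightarrow> real) \<Rightarrow> 's \<Rightarrow> real" where
  "visit P JA g d0 pol s = (\<Sum>t. g ^ t * state_dist P JA pol d0 t s)"

definition zeta :: "('s::finite \<Rightarrow> 'b \<Rightarrow> 's \<Rightarrow> real) \<Rightarrow> 'b set \<Rightarrow> real \<Rightarrow> ('s \<Rightarrow> real)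
    \<Rightarrow> ('i::finite \<Rightarrow> 's \<Rightarrow> 'b \<Rightarrow> real) \<Rightarrow> ('s \<Rightarrow> 'b \<Rightarrow> real)
    \<Rightarrow> ('i \<Rightarrow> 's \<Rightarrow> 'b \<Rightarrow> real) \<Rightarrow> real" where
  "zeta P JA g d0 R pol' Pit =
     (\<Sum>i\<in>UNIV. \<Sum>s\<in>UNIV. visit P JA g d0 pol' s *
        (\<Sum>a\<in>JA. Pit i s a * Adv P JA g pol' (R i) s a))"

text \<open>KL divergence of distributions on A (convention 0 ln 0 = 0).\<close>
definition KL :: "'a set \<Rightarrow> ('a \<Rightarrow> real) \<Rightarrow> ('a \<Rightarrow> real) \<Rightarrow> real" where
  "KL A p q = (\<Sum>a\<in>A. p a * ln (p a / q a))"

definition KLmax :: "'a set \<Rightarrow> ('s::finite \<Rightarrow> 'a \<Rightarrow> real) \<Rightarrow> ('s \<Rightarrow> 'a \<Rightarrow> real) \<Rightarrow> real" where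
  "KLmax A p q = Max (range (\<lambda>s. KL A (p s) (q s)))"

end

theory Submission
  imports Defs "HOL-Analysis.Analysis"
begin

lemma kl_term:
  fixes p q :: real
  assumes p: "0 \<le> p" and q: "0 \<le> q" and ac: "0 < p \<Longrightarrow> 0 < q"
  shows "2 * (p - sqrt p * sqrt q) \<le> p * ln (p / q)"
proof (cases "p = 0")
  case True then show ?thesis by simp
next
  case False
  then have pp: "0 < p" using p by simp
  then have qp: "0 < q" using ac by simp
  define y where "y = sqrt q / sqrt p"
  have yp: "0 < y" using pp qp by (simp add: y_def)
  have lny: "ln y = (ln q - ln p) / 2"
    using pp qp by (simp add: y_def ln_div ln_sqrt diff_divide_distrib)
  have "ln y \<le> y - 1" by (rule ln_le_minus_one[OF yp])
  then have "p * ln y \<le> p * (y - 1)" using pp by (intro mult_left_mono) auto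
  moreover have "p * y = sqrt p * sqrt q"
  proof -
    have "p = sqrt p * sqrt p" using pp by simp
    then show ?thesis using pp by (simp add: y_def field_simps)
  qed
  moreover have "p * ln (p / q) = - 2 * (p * ln y)"
    using pp qp by (simp add: lny ln_div algebra_simps)
  ultimately show ?thesis by (simp add: algebra_simps)
qed

lemma one_minus_prod:
  fixes x :: "'i \<Rightarrow> real"
  assumes "finite A" "\<And>i. i \<in> A \<Longrightarrow> 0 \<le> x i \<and> x i \<le> 1"
  shows "1 - prod x A \<le> (\<Sum>i\<in>A. 1 - x i)"
  using assms
proof (induction A rule: finite_induct)
  case empty then show ?case by simp
next
  case (insert a A)
  have h: "1 - prod x A \<le> (\<Sum>i\<in>A. 1 - x i)" using insert by auto
  have xa: "0 \<le> x a" "x a \<le> 1" using insert by auto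
  have pA: "0 \<le> prod x A" "prod x A \<le> 1" using insert by (auto intro: prod_nonneg prod_le_1)
  have "0 \<le> (1 - x a) * (1 - prod x A)" using xa pA by simp
  then have "1 - x a * prod x A \<le> (1 - x a) + (1 - prod x A)" by (simp add: algebra_simps)
  then show ?case using insert h by simp
qed

lemma prod_sqrt_sq:
  fixes f :: "'i \<Rightarrow> real"
  assumes "finite A" "\<And>i. 0 \<le> f i"
  shows "(\<Prod>i\<in>A. sqrt (f i))\<^sup>2 = (\<Prod>i\<in>A. f i)"
  unfolding prod_power_distrib using assms by (intro prod.cong refl) simp

lemma tv_kl:
  fixes Act :: "'i::finite \<Rightarrow> 'a set" and p q :: "'i \<Rightarrow> 'a \<Rightarrow> real"
  assumes fin: "\<And>i. finite (Act i)"
    and pn: "\<And>i x. x \<in> Act i \<Longrightarrow> 0 \<le> p i x" and qn: "\<And>i x. x \<in> Act i \<Longrightarrow> 0 \<le> q i x"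
    and ps: "\<And>i. (\<Sum>x\<in>Act i. p i x) = 1" and qs: "\<And>i. (\<Sum>x\<in>Act i. q i x) = 1"
    and ac: "\<And>i x. x \<in> Act i \<Longrightarrow> 0 < p i x \<Longrightarrow> 0 < q i x"
  shows "(\<Sum>a\<in>PiE UNIV Act. \<bar>(\<Prod>i\<in>UNIV. q i (a i)) - (\<Prod>i\<in>UNIV. p i (a i))\<bar>)\<^sup>2
         \<le> 4 * (\<Sum>i\<in>UNIV. KL (Act i) (p i) (q i))"
proof -
  define J where "J = PiE UNIV Act"
  have finJ: "finite J" unfolding J_def using fin by (intro finite_PiE) auto
  define Bi where "Bi i = (\<Sum>x\<in>Act i. sqrt (p i x) * sqrt (q i x))" for i
  define sP where "sP a = (\<Prod>i\<in>UNIV. sqrt (p i (a i)))" for a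
  define sQ where "sQ a = (\<Prod>i\<in>UNIV. sqrt (q i (a i)))" for a
  define B where "B = (\<Sum>a\<in>J. sP a * sQ a)"
  have aJ: "a i \<in> Act i" if "a \<in> J" for a i using that by (auto simp: J_def)
  have sPsq: "(sP a)\<^sup>2 = (\<Prod>i\<in>UNIV. p i (a i))" if "a \<in> J" for a
    unfolding sP_def prod_power_distrib by (intro prod.cong refl) (simp add: pn[OF aJ[OF that]])
  have sQsq: "(sQ a)\<^sup>2 = (\<Prod>i\<in>UNIV. q i (a i))" if "a \<in> J" for a
    unfolding sQ_def prod_power_distrib by (intro prod.cong refl) (simp add: qn[OF aJ[OF that]])
  have sP0: "0 \<le> sP a" if "a \<in> J" for a unfolding sP_def by (intro prod_nonneg) (simp add: pn[OF aJ[OF that]])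
  have sQ0: "0 \<le> sQ a" if "a \<in> J" for a unfolding sQ_def by (intro prod_nonneg) (simp add: qn[OF aJ[OF that]])
  have sumP: "(\<Sum>a\<in>J. (sP a)\<^sup>2) = 1"
  proof -
    have "(\<Sum>a\<in>J. (sP a)\<^sup>2) = (\<Sum>a\<in>J. \<Prod>i\<in>UNIV. p i (a i))" by (simp add: sPsq)
    also have "\<dots> = (\<Prod>i\<in>UNIV. \<Sum>x\<in>Act i. p i x)" unfolding J_def
      by (rule prod_sum_PiE[symmetric]) (auto simp: fin)
    finally show ?thesis by (simp add: ps)
  qed
  have sumQ: "(\<Sum>a\<in>J. (sQ a)\<^sup>2) = 1"
  proof -
    have "(\<Sum>a\<in>J. (sQ a)\<^sup>2) = (\<Sum>a\<in>J. \<Prod>i\<in>UNIV. q i (a i))" by (simp add: sQsq)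
    also have "\<dots> = (\<Prod>i\<in>UNIV. \<Sum>x\<in>Act i. q i x)" unfolding J_def
      by (rule prod_sum_PiE[symmetric]) (auto simp: fin)
    finally show ?thesis by (simp add: qs)
  qed
  have Bprod: "B = (\<Prod>i\<in>UNIV. Bi i)"
  proof -
    have "B = (\<Sum>a\<in>J. \<Prod>i\<in>UNIV. sqrt (p i (a i)) * sqrt (q i (a i)))"
      by (simp add: B_def sP_def sQ_def prod.distrib)
    also have "\<dots> = (\<Prod>i\<in>UNIV. Bi i)" unfolding J_def Bi_def
      by (rule prod_sum_PiE[symmetric]) (auto simp: fin)
    finally show ?thesis .
  qed
  have Bi01: "0 \<le> Bi i \<and> Bi i \<le> 1" for i
  proof
    show "0 \<le> Bi i" unfolding Bi_def by (intro sum_nonneg) (simp add: pn qn)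
    have "Bi i \<le> (\<Sum>x\<in>Act i. (p i x + q i x) / 2)" unfolding Bi_def
    proof (intro sum_mono)
      fix x assume x: "x \<in> Act i"
      have "0 \<le> (sqrt (p i x) - sqrt (q i x))\<^sup>2" by simp
      then show "sqrt (p i x) * sqrt (q i x) \<le> (p i x + q i x) / 2"
        using pn[OF x] qn[OF x] by (simp add: power2_eq_square algebra_simps)
    qed
    also have "\<dots> = 1" using ps[of i] qs[of i] by (simp add: sum.distrib flip: sum_divide_distrib)
    finally show "Bi i \<le> 1" .
  qed
  have KLb: "2 * (1 - Bi i) \<le> KL (Act i) (p i) (q i)" for i
  proof -
    have "(\<Sum>x\<in>Act i. 2 * (p i x - sqrt (p i x) * sqrt (q i x))) = 2 * ((\<Sum>x\<in>Act i. p i x) - Bi i)"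
      by (simp add: Bi_def sum_subtractf sum_distrib_left)
    then have "2 * (1 - Bi i) = (\<Sum>x\<in>Act i. 2 * (p i x - sqrt (p i x) * sqrt (q i x)))"
      using ps[of i] by simp
    also have "\<dots> \<le> KL (Act i) (p i) (q i)" unfolding KL_def
      by (intro sum_mono kl_term pn qn ac) auto
    finally show ?thesis .
  qed
  have B01: "0 \<le> B" "B \<le> 1"
    using Bi01 by (auto simp: Bprod intro: prod_nonneg prod_le_1)
  have "(\<Sum>a\<in>J. \<bar>(\<Prod>i\<in>UNIV. q i (a i)) - (\<Prod>i\<in>UNIV. p i (a i))\<bar>)
      = (\<Sum>a\<in>J. \<bar>sQ a - sP a\<bar> * (sQ a + sP a))"
  proof (rule sum.cong[OF refl])
    fix a assume a: "a \<in> J"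
    have "(\<Prod>i\<in>UNIV. q i (a i)) - (\<Prod>i\<in>UNIV. p i (a i)) = (sQ a - sP a) * (sQ a + sP a)"
      using sPsq[OF a] sQsq[OF a] by (simp add: power2_eq_square algebra_simps)
    then show "\<bar>(\<Prod>i\<in>UNIV. q i (a i)) - (\<Prod>i\<in>UNIV. p i (a i))\<bar> = \<bar>sQ a - sP a\<bar> * (sQ a + sP a)"
      using sP0[OF a] sQ0[OF a] by (simp add: abs_mult)
  qed
  then have "(\<Sum>a\<in>J. \<bar>(\<Prod>i\<in>UNIV. q i (a i)) - (\<Prod>i\<in>UNIV. p i (a i))\<bar>)\<^sup>2
      \<le> (\<Sum>a\<in>J. \<bar>sQ a - sP a\<bar>\<^sup>2) * (\<Sum>a\<in>J. (sQ a + sP a)\<^sup>2)"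
    using Cauchy_Schwarz_ineq_sum[of "\<lambda>a. \<bar>sQ a - sP a\<bar>" "\<lambda>a. sQ a + sP a" J] by simp
  also have "\<dots> = (2 - 2 * B) * (2 + 2 * B)"
  proof -
    have "(\<Sum>a\<in>J. \<bar>sQ a - sP a\<bar>\<^sup>2) = (\<Sum>a\<in>J. (sQ a)\<^sup>2) + (\<Sum>a\<in>J. (sP a)\<^sup>2) - 2 * B"
      by (simp add: B_def power2_eq_square algebra_simps sum.distrib sum_subtractf sum_distrib_left)
    moreover have "(\<Sum>a\<in>J. (sQ a + sP a)\<^sup>2) = (\<Sum>a\<in>J. (sQ a)\<^sup>2) + (\<Sum>a\<in>J. (sP a)\<^sup>2) + 2 * B"
      by (simp add: B_def power2_eq_square algebra_simps sum.distrib sum_distrib_left)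
    ultimately show ?thesis using sumP sumQ by simp
  qed
  also have "\<dots> \<le> 8 * (1 - B)"
  proof -
    have "(2 - 2 * B) * (2 + 2 * B) = 4 * ((1 - B) * (1 + B))" by (simp add: algebra_simps)
    also have "\<dots> \<le> 4 * ((1 - B) * 2)" using B01 by (intro mult_left_mono) auto
    finally show ?thesis by simp
  qed
  also have "\<dots> \<le> 8 * (\<Sum>i\<in>UNIV. 1 - Bi i)"
    using one_minus_prod[of UNIV Bi] Bi01 by (simp add: Bprod)
  also have "\<dots> \<le> 4 * (\<Sum>i\<in>UNIV. KL (Act i) (p i) (q i))"
  proof -
    have "(\<Sum>i\<in>UNIV. 2 * (1 - Bi i)) \<le> (\<Sum>i\<in>UNIV. KL (Act i) (p i) (q i))"
      by (intro sum_mono KLb)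
    moreover have "(\<Sum>i\<in>UNIV. 2 * (1 - Bi i)) = 2 * (\<Sum>i\<in>UNIV. 1 - Bi i)"
      by (rule sum_distrib_left[symmetric])
    ultimately show ?thesis by linarith
  qed
  finally show ?thesis unfolding J_def .
qed

lemma quad_bound:
  fixes v :: "'s::finite \<Rightarrow> real" and x y A :: "'s \<Rightarrow> 'b \<Rightarrow> real"
  assumes fin: "finite JA" and Am: "\<And>s a. a \<in> JA \<Longrightarrow> \<bar>A s a\<bar> \<le> m"
  shows "(\<Sum>s\<in>UNIV. v s * (\<Sum>a\<in>JA. x s a * A s a)) - (\<Sum>s\<in>UNIV. v s * (\<Sum>a\<in>JA. y s a * A s a))
     \<ge> - (1/2 * m * real (card JA) * (\<Sum>s\<in>UNIV. (v s)^2) + 1/2 * m * (\<Sum>s\<in>UNIV. \<Sum>a\<in>JA. (y s a - x s a)^2))"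
proof -
  have pt: "v s * (x s a - y s a) * A s a \<ge> - (1/2 * m * (v s)^2 + 1/2 * m * (y s a - x s a)^2)"
    if a: "a \<in> JA" for s a
  proof -
    have m0: "0 \<le> m" using Am[OF a, of s] by linarith
    have "\<bar>v s * (x s a - y s a) * A s a\<bar> = \<bar>v s\<bar> * \<bar>x s a - y s a\<bar> * \<bar>A s a\<bar>" by (simp add: abs_mult)
    also have "\<dots> \<le> \<bar>v s\<bar> * \<bar>x s a - y s a\<bar> * m" by (intro mult_left_mono Am a) simp
    also have "\<dots> \<le> ((v s)^2 + (y s a - x s a)^2) / 2 * m"
    proof (intro mult_right_mono m0)
      have "0 \<le> (\<bar>v s\<bar> - \<bar>x s a - y s a\<bar>)^2" by simp
      then show "\<bar>v s\<bar> * \<bar>x s a - y s a\<bar> \<le> ((v s)^2 + (y s a - x s a)^2) / 2"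
        by (simp add: power2_eq_square algebra_simps abs_minus_commute)
    qed
    finally have h: "\<bar>v s * (x s a - y s a) * A s a\<bar> \<le> ((v s)^2 + (y s a - x s a)^2) / 2 * m" .
    have e: "((v s)^2 + (y s a - x s a)^2) / 2 * m = 1/2 * m * (v s)^2 + 1/2 * m * (y s a - x s a)^2"
      by (simp add: algebra_simps)
    show ?thesis using abs_le_D2[OF h] e by linarith
  qed
  have "(\<Sum>s\<in>UNIV. v s * (\<Sum>a\<in>JA. x s a * A s a)) - (\<Sum>s\<in>UNIV. v s * (\<Sum>a\<in>JA. y s a * A s a))
      = (\<Sum>s\<in>UNIV. \<Sum>a\<in>JA. v s * (x s a - y s a) * A s a)"
    by (simp add: sum_subtractf[symmetric] sum_distrib_left algebra_simps)
  also have "\<dots> \<ge> (\<Sum>s\<in>UNIV. \<Sum>a\<in>JA. - (1/2 * m * (v s)^2 + 1/2 * m * (y s a - x s a)^2))"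
    by (intro sum_mono pt)
  also have "(\<Sum>s\<in>UNIV. \<Sum>a\<in>JA. - (1/2 * m * (v s)^2 + 1/2 * m * (y s a - x s a)^2))
      = - (1/2 * m * real (card JA) * (\<Sum>s\<in>UNIV. (v s)^2) + 1/2 * m * (\<Sum>s\<in>UNIV. \<Sum>a\<in>JA. (y s a - x s a)^2))"
  proof -
    have "(\<Sum>s\<in>UNIV. \<Sum>a\<in>JA. - (1/2 * m * (v s)^2 + 1/2 * m * (y s a - x s a)^2))
        = - ((\<Sum>s\<in>UNIV. \<Sum>a\<in>JA. 1/2 * m * (v s)^2) + (\<Sum>s\<in>UNIV. \<Sum>a\<in>JA. 1/2 * m * (y s a - x s a)^2))"
      by (simp only: sum_negf sum.distrib)
    moreover have "(\<Sum>s\<in>UNIV. \<Sum>a\<in>JA. 1/2 * m * (v s)^2) = 1/2 * m * real (card JA) * (\<Sum>s\<in>UNIV. (v s)^2)"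
      by (simp add: sum_distrib_left mult.assoc) (simp add: mult.left_commute)
    moreover have "(\<Sum>s\<in>UNIV. \<Sum>a\<in>JA. 1/2 * m * (y s a - x s a)^2) = 1/2 * m * (\<Sum>s\<in>UNIV. \<Sum>a\<in>JA. (y s a - x s a)^2)"
      by (simp add: sum_distrib_left)
    ultimately show ?thesis by simp
  qed
  finally show ?thesis .
qed

definition delta :: "'s \<Rightarrow> 's \<Rightarrow> real" where
  "delta s = (\<lambda>s'. if s' = s then 1 else 0)"

definition isdist :: "('s::finite \<Rightarrow> real) \<Rightarrow> bool" where
  "isdist mu \<longleftrightarrow> (\<forall>s. 0 \<le> mu s) \<and> (\<Sum>s\<in>UNIV. mu s) = 1"

locale mdp =
  fixes P :: "'s::finite \<Rightarrow> 'b \<Rightarrow> 's \<Rightarrow> real" and JA :: "'b set" and g :: real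
  assumes finJA: "finite JA"
    and Pnn: "\<And>s a s'. a \<in> JA \<Longrightarrow> 0 \<le> P s a s'"
    and Psum: "\<And>s a. a \<in> JA \<Longrightarrow> (\<Sum>s'\<in>UNIV. P s a s') = 1"
    and g0: "0 < g" and g1: "g < 1"
begin

abbreviation sd where "sd pol mu t \<equiv> state_dist P JA pol mu t"

definition step where "step pol mu = (\<lambda>s'. \<Sum>s\<in>UNIV. \<Sum>a\<in>JA. mu s * pol s a * P s a s')"

lemma sd_shift: "sd pol mu (Suc t) = sd pol (step pol mu) t"
  by (induction t) (simp_all add: step_def)

lemma sd_decomp: "sd pol mu t s' = (\<Sum>u\<in>UNIV. mu u * sd pol (delta u) t s')"
proof (induction t arbitrary: s')
  case 0
  have "(\<Sum>u\<in>UNIV. mu u * delta u s') = (\<Sum>u\<in>UNIV. if u = s' then mu u else 0)"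
    by (rule sum.cong) (auto simp: delta_def)
  then show ?case by simp
next
  case (Suc t)
  have "sd pol mu (Suc t) s' = (\<Sum>s\<in>UNIV. \<Sum>a\<in>JA. (\<Sum>u\<in>UNIV. mu u * sd pol (delta u) t s) * pol s a * P s a s')"
    using Suc by (simp del: state_dist.simps(2) add: state_dist.simps(2)[of P JA pol mu t])
  also have "\<dots> = (\<Sum>u\<in>UNIV. mu u * (\<Sum>s\<in>UNIV. \<Sum>a\<in>JA. sd pol (delta u) t s * pol s a * P s a s'))" (is "_ = ?rhs")
  proof -
    have "(\<Sum>s\<in>UNIV. \<Sum>a\<in>JA. (\<Sum>u\<in>UNIV. mu u * sd pol (delta u) t s) * pol s a * P s a s')
       = (\<Sum>s\<in>UNIV. \<Sum>a\<in>JA. \<Sum>u\<in>UNIV. mu u * (sd pol (delta u) t s * pol s a * P s a s'))"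
      by (simp add: sum_distrib_right mult.assoc)
    also have "\<dots> = (\<Sum>s\<in>UNIV. \<Sum>u\<in>UNIV. \<Sum>a\<in>JA. mu u * (sd pol (delta u) t s * pol s a * P s a s'))"
      by (rule sum.cong[OF refl], rule sum.swap)
    also have "\<dots> = (\<Sum>u\<in>UNIV. \<Sum>s\<in>UNIV. \<Sum>a\<in>JA. mu u * (sd pol (delta u) t s * pol s a * P s a s'))"
      by (rule sum.swap)
    also have "\<dots> = ?rhs" by (simp only: sum_distrib_left)
    finally show ?thesis .
  qed
  finally show ?case by simp
qed

lemma step_dist:
  assumes pol: "is_policy JA pol" and mu: "isdist mu"
  shows "isdist (step pol mu)"
proof -
  have nn: "0 \<le> step pol mu s'" for s'
    unfolding step_def using pol mu Pnn
    by (intro sum_nonneg) (auto simp: is_policy_def isdist_def)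
  have "(\<Sum>s'\<in>UNIV. step pol mu s') = (\<Sum>s\<in>UNIV. \<Sum>a\<in>JA. mu s * pol s a * (\<Sum>s'\<in>UNIV. P s a s'))"
  proof -
    have "(\<Sum>s'\<in>UNIV. step pol mu s') = (\<Sum>s'\<in>UNIV. \<Sum>s\<in>UNIV. \<Sum>a\<in>JA. mu s * pol s a * P s a s')"
      by (simp add: step_def)
    also have "\<dots> = (\<Sum>s\<in>UNIV. \<Sum>s'\<in>UNIV. \<Sum>a\<in>JA. mu s * pol s a * P s a s')"
      by (rule sum.swap)
    also have "\<dots> = (\<Sum>s\<in>UNIV. \<Sum>a\<in>JA. \<Sum>s'\<in>UNIV. mu s * pol s a * P s a s')"
      by (rule sum.cong[OF refl], rule sum.swap)
    also have "\<dots> = (\<Sum>s\<in>UNIV. \<Sum>a\<in>JA. mu s * pol s a * (\<Sum>s'\<in>UNIV. P s a s'))"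
      by (simp only: sum_distrib_left)
    finally show ?thesis .
  qed
  also have "\<dots> = (\<Sum>s\<in>UNIV. mu s * (\<Sum>a\<in>JA. pol s a))"
    by (simp add: Psum sum_distrib_left cong: sum.cong)
  also have "\<dots> = 1" using pol mu by (simp add: is_policy_def isdist_def)
  finally show ?thesis using nn by (simp add: isdist_def)
qed

lemma sd_dist:
  assumes pol: "is_policy JA pol" and mu: "isdist mu"
  shows "isdist (sd pol mu t)"
  using mu
proof (induction t arbitrary: mu)
  case 0 then show ?case by simp
next
  case (Suc t)
  then show ?case by (simp only: sd_shift step_dist[OF pol])
qed


definition rpi where "rpi pol r s = (\<Sum>a\<in>JA. pol s a * r s a)"

abbreviation er where "er pol r mu t \<equiv> exp_reward P JA pol r mu t"

abbreviation V where "V pol r \<equiv> Vfun P JA g pol r"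

lemma er_def2: "er pol r mu t = (\<Sum>s\<in>UNIV. sd pol mu t s * rpi pol r s)"
  by (simp add: exp_reward_def rpi_def)

lemma finite_bound: "\<exists>B. \<forall>s::'s. \<bar>f s\<bar> \<le> (B::real)"
  by (rule exI[of _ "\<Sum>s\<in>UNIV. \<bar>f s\<bar>"]) (auto intro: member_le_sum)

lemma avg_bound:
  assumes "isdist mu" "\<And>s. \<bar>f s\<bar> \<le> B"
  shows "\<bar>\<Sum>s\<in>UNIV. mu s * f s\<bar> \<le> B"
proof -
  have "\<bar>\<Sum>s\<in>UNIV. mu s * f s\<bar> \<le> (\<Sum>s\<in>UNIV. \<bar>mu s * f s\<bar>)" by (rule sum_abs)
  also have "\<dots> \<le> (\<Sum>s\<in>UNIV. mu s * B)"
    using assms by (intro sum_mono) (auto simp: isdist_def abs_mult intro: mult_left_mono)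
  also have "\<dots> = B" using assms(1) by (simp add: isdist_def flip: sum_distrib_right)
  finally show ?thesis .
qed

lemma sum_delta: "(\<Sum>u\<in>UNIV. delta (s::'s) u * f u) = (f s::real)"
proof -
  have "(\<Sum>u\<in>UNIV. delta s u * f u) = (\<Sum>u\<in>UNIV. if u = s then f u else 0)"
    by (rule sum.cong) (auto simp: delta_def)
  also have "\<dots> = f s" by simp
  finally show ?thesis .
qed

lemma delta_dist: "isdist (delta s)"
  by (simp add: isdist_def delta_def)

lemma er_bound:
  assumes pol: "is_policy JA pol"
  shows "\<exists>B. \<forall>mu t. isdist mu \<longrightarrow> \<bar>er pol r mu t\<bar> \<le> B"
proof -
  obtain B where B: "\<And>s. \<bar>rpi pol r s\<bar> \<le> B" using finite_bound by blast
  show ?thesis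
    by (rule exI[of _ B], auto simp: er_def2 intro!: avg_bound[OF sd_dist[OF pol]] B)
qed

lemma summable_bounded_geo:
  assumes "\<And>t. \<bar>f t\<bar> \<le> B"
  shows "summable (\<lambda>t. g ^ t * f t)"
proof (rule summable_comparison_test'[where g = "\<lambda>t. B * g ^ t" and N = 0])
  show "summable (\<lambda>t. B * g ^ t)" using g0 g1 by (intro summable_mult summable_geometric) auto
  fix t :: nat
  have "\<bar>g ^ t * f t\<bar> = g ^ t * \<bar>f t\<bar>" using g0 by (simp add: abs_mult)
  also have "\<dots> \<le> g ^ t * B" using g0 assms by (intro mult_left_mono) auto
  finally show "norm (g ^ t * f t) \<le> B * g ^ t" by (simp add: mult.commute)
qed

lemma summable_er:
  assumes pol: "is_policy JA pol" and mu: "isdist mu"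
  shows "summable (\<lambda>t. g ^ t * er pol r mu t)"
proof -
  obtain B where "\<forall>mu t. isdist mu \<longrightarrow> \<bar>er pol r mu t\<bar> \<le> B" using er_bound[OF pol] by blast
  then show ?thesis using mu by (intro summable_bounded_geo) auto
qed

lemma V_sums:
  assumes pol: "is_policy JA pol"
  shows "(\<lambda>t. g ^ t * er pol r (delta s) t) sums V pol r s"
proof -
  have "V pol r s = (\<Sum>t. g ^ t * er pol r (delta s) t)" by (simp add: Vfun_def delta_def)
  then show ?thesis using summable_sums[OF summable_er[OF pol delta_dist]] by simp
qed

lemma er_decomp: "er pol r mu t = (\<Sum>u\<in>UNIV. mu u * er pol r (delta u) t)"
proof -
  have "er pol r mu t = (\<Sum>s\<in>UNIV. \<Sum>u\<in>UNIV. mu u * (sd pol (delta u) t s * rpi pol r s))"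
    by (simp add: er_def2 sd_decomp[of pol mu t] sum_distrib_right mult.assoc)
  also have "\<dots> = (\<Sum>u\<in>UNIV. \<Sum>s\<in>UNIV. mu u * (sd pol (delta u) t s * rpi pol r s))"
    by (rule sum.swap)
  also have "\<dots> = (\<Sum>u\<in>UNIV. mu u * er pol r (delta u) t)"
    by (simp add: er_def2 sum_distrib_left)
  finally show ?thesis .
qed

lemma comb_sums:
  assumes pol: "is_policy JA pol"
  shows "(\<lambda>t. g ^ t * er pol r mu t) sums (\<Sum>u\<in>UNIV. mu u * V pol r u)"
proof -
  have "(\<lambda>t. \<Sum>u\<in>UNIV. mu u * (g ^ t * er pol r (delta u) t)) sums (\<Sum>u\<in>UNIV. mu u * V pol r u)"
    by (intro sums_sum sums_mult V_sums[OF pol])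
  moreover have "(\<lambda>t. \<Sum>u\<in>UNIV. mu u * (g ^ t * er pol r (delta u) t)) = (\<lambda>t. g ^ t * er pol r mu t)"
    by (rule ext, subst er_decomp[of pol r mu]) (simp add: sum_distrib_left mult.left_commute)
  ultimately show ?thesis by simp
qed

lemma step_delta: "step pol (delta s) u = (\<Sum>a\<in>JA. pol s a * P s a u)"
proof -
  have "step pol (delta s) u = (\<Sum>s'\<in>UNIV. if s' = s then (\<Sum>a\<in>JA. pol s' a * P s' a u) else 0)"
    unfolding step_def by (rule sum.cong) (auto simp: delta_def)
  then show ?thesis by simp
qed

lemma bellman:
  assumes pol: "is_policy JA pol"
  shows "V pol r s = rpi pol r s + g * (\<Sum>u\<in>UNIV. step pol (delta s) u * V pol r u)"
proof -
  have "(\<lambda>t. g ^ Suc t * er pol r (delta s) (Suc t)) sums (V pol r s - g ^ 0 * er pol r (delta s) 0)"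
    using V_sums[OF pol, of r s] by (subst sums_Suc_iff) simp
  moreover have "(\<lambda>t. g ^ Suc t * er pol r (delta s) (Suc t)) = (\<lambda>t. g * (g ^ t * er pol r (step pol (delta s)) t))"
    by (rule ext) (simp only: exp_reward_def sd_shift power_Suc mult.assoc)
  moreover have "(\<lambda>t. g * (g ^ t * er pol r (step pol (delta s)) t)) sums (g * (\<Sum>u\<in>UNIV. step pol (delta s) u * V pol r u))"
    by (intro sums_mult comb_sums[OF pol])
  moreover have "er pol r (delta s) 0 = rpi pol r s"
  proof -
    show ?thesis by (simp add: er_def2 sum_delta)
  qed
  ultimately show ?thesis by (metis (no_types, lifting) add_diff_cancel_left' diff_add_cancel power_0 mult_1 sums_unique2)
qed

lemma Q_eq:
  assumes pol: "is_policy JA pol"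
  shows "Qfun P JA g pol r s a = r s a + g * (\<Sum>u\<in>UNIV. P s a u * V pol r u)"
proof -
  have "(\<lambda>t. g ^ Suc t * er pol r (P s a) t) sums (g * (\<Sum>u\<in>UNIV. P s a u * V pol r u))"
    using sums_mult[OF comb_sums[OF pol, of r "P s a"], of g] by (simp add: mult.assoc)
  then show ?thesis by (simp add: Qfun_def sums_iff)
qed

lemma adv_avg_zero:
  assumes pol: "is_policy JA pol"
  shows "(\<Sum>a\<in>JA. pol s a * Adv P JA g pol r s a) = 0"
proof -
  have s1: "(\<Sum>a\<in>JA. pol s a) = 1" using pol by (simp add: is_policy_def)
  have "(\<Sum>a\<in>JA. pol s a * (\<Sum>u\<in>UNIV. P s a u * V pol r u)) = (\<Sum>a\<in>JA. \<Sum>u\<in>UNIV. pol s a * P s a u * V pol r u)"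
    by (simp add: sum_distrib_left mult.assoc)
  also have "\<dots> = (\<Sum>u\<in>UNIV. \<Sum>a\<in>JA. pol s a * P s a u * V pol r u)" by (rule sum.swap)
  also have "\<dots> = (\<Sum>u\<in>UNIV. step pol (delta s) u * V pol r u)"
    by (simp add: step_delta sum_distrib_right)
  finally have e: "(\<Sum>a\<in>JA. pol s a * (\<Sum>u\<in>UNIV. P s a u * V pol r u)) = (\<Sum>u\<in>UNIV. step pol (delta s) u * V pol r u)" .
  have "(\<Sum>a\<in>JA. pol s a * Adv P JA g pol r s a)
      = (\<Sum>a\<in>JA. pol s a * r s a) + g * (\<Sum>a\<in>JA. pol s a * (\<Sum>u\<in>UNIV. P s a u * V pol r u)) - (\<Sum>a\<in>JA. pol s a) * V pol r s"
    by (simp add: Adv_def Q_eq[OF pol] algebra_simps sum.distrib sum_subtractf sum_distrib_left sum_distrib_right)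
  also have "\<dots> = 0" using bellman[OF pol, of r s] by (simp add: e s1 rpi_def)
  finally show ?thesis .
qed


lemma sd_Suc_step: "sd pol mu (Suc t) = step pol (sd pol mu t)"
  by (simp add: step_def)

lemma step_decomp: "step pol mu u = (\<Sum>s\<in>UNIV. mu s * step pol (delta s) u)"
  using sd_decomp[of pol mu "Suc 0" u] by (simp only: sd_shift state_dist.simps(1))

lemma adv_avg:
  assumes pol: "is_policy JA pol" and pol': "is_policy JA pol'"
  shows "(\<Sum>a\<in>JA. pol' s a * Adv P JA g pol r s a)
         = rpi pol' r s + g * (\<Sum>u\<in>UNIV. step pol' (delta s) u * V pol r u) - V pol r s"
proof -
  have s1: "(\<Sum>a\<in>JA. pol' s a) = 1" using pol' by (simp add: is_policy_def)
  have "(\<Sum>a\<in>JA. pol' s a * (\<Sum>u\<in>UNIV. P s a u * V pol r u)) = (\<Sum>a\<in>JA. \<Sum>u\<in>UNIV. pol' s a * P s a u * V pol r u)"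
    by (simp add: sum_distrib_left mult.assoc)
  also have "\<dots> = (\<Sum>u\<in>UNIV. \<Sum>a\<in>JA. pol' s a * P s a u * V pol r u)" by (rule sum.swap)
  also have "\<dots> = (\<Sum>u\<in>UNIV. step pol' (delta s) u * V pol r u)"
    by (simp add: step_delta sum_distrib_right)
  finally have e: "(\<Sum>a\<in>JA. pol' s a * (\<Sum>u\<in>UNIV. P s a u * V pol r u)) = (\<Sum>u\<in>UNIV. step pol' (delta s) u * V pol r u)" .
  have "(\<Sum>a\<in>JA. pol' s a * Adv P JA g pol r s a)
      = (\<Sum>a\<in>JA. pol' s a * r s a) + g * (\<Sum>a\<in>JA. pol' s a * (\<Sum>u\<in>UNIV. P s a u * V pol r u)) - (\<Sum>a\<in>JA. pol' s a) * V pol r s"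
    by (simp add: Adv_def Q_eq[OF pol] algebra_simps sum.distrib sum_subtractf sum_distrib_left sum_distrib_right)
  also have "\<dots> = rpi pol' r s + g * (\<Sum>u\<in>UNIV. step pol' (delta s) u * V pol r u) - V pol r s"
    by (simp add: e s1 rpi_def)
  finally show ?thesis .
qed

lemma tends_zero_bounded:
  assumes "\<And>t. \<bar>f t\<bar> \<le> B"
  shows "(\<lambda>t. g ^ t * f t) \<longlonglongrightarrow> 0"
proof (rule Lim_null_comparison[where g = "\<lambda>t. B * g ^ t"])
  show "\<forall>\<^sub>F t in sequentially. norm (g ^ t * f t) \<le> B * g ^ t"
  proof (rule always_eventually, rule allI)
    fix t
    have "\<bar>g ^ t * f t\<bar> = g ^ t * \<bar>f t\<bar>" using g0 by (simp add: abs_mult)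
    also have "\<dots> \<le> g ^ t * B" using g0 assms by (intro mult_left_mono) auto
    finally show "norm (g ^ t * f t) \<le> B * g ^ t" by (simp add: mult.commute)
  qed
  show "(\<lambda>t. B * g ^ t) \<longlonglongrightarrow> 0"
    using g0 g1 by (intro tendsto_mult_right_zero LIMSEQ_power_zero) auto
qed

lemma pdl:
  assumes pol: "is_policy JA pol" and pol': "is_policy JA pol'" and d0: "isdist d0"
  shows "(\<lambda>t. g ^ t * (\<Sum>s\<in>UNIV. sd pol' d0 t s * (\<Sum>a\<in>JA. pol' s a * Adv P JA g pol r s a)))
          sums ((\<Sum>t. g ^ t * er pol' r d0 t) - (\<Sum>t. g ^ t * er pol r d0 t))"
proof -
  define W where "W t = (\<Sum>s\<in>UNIV. sd pol' d0 t s * V pol r s)" for t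
  have WS: "W (Suc t) = (\<Sum>s\<in>UNIV. sd pol' d0 t s * (\<Sum>u\<in>UNIV. step pol' (delta s) u * V pol r u))" for t
  proof -
    have "W (Suc t) = (\<Sum>u\<in>UNIV. (\<Sum>s\<in>UNIV. sd pol' d0 t s * step pol' (delta s) u) * V pol r u)"
      unfolding W_def
      by (simp only: sd_Suc_step step_decomp[of pol' "sd pol' d0 t"])
    also have "\<dots> = (\<Sum>u\<in>UNIV. \<Sum>s\<in>UNIV. sd pol' d0 t s * (step pol' (delta s) u * V pol r u))"
      by (simp add: sum_distrib_right mult.assoc)
    also have "\<dots> = (\<Sum>s\<in>UNIV. \<Sum>u\<in>UNIV. sd pol' d0 t s * (step pol' (delta s) u * V pol r u))"
      by (rule sum.swap)
    also have "\<dots> = (\<Sum>s\<in>UNIV. sd pol' d0 t s * (\<Sum>u\<in>UNIV. step pol' (delta s) u * V pol r u))"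
      by (simp add: sum_distrib_left)
    finally show ?thesis .
  qed
  have trm: "g ^ t * (\<Sum>s\<in>UNIV. sd pol' d0 t s * (\<Sum>a\<in>JA. pol' s a * Adv P JA g pol r s a))
      = g ^ t * er pol' r d0 t + (g ^ Suc t * W (Suc t) - g ^ t * W t)" for t
  proof -
    have "(\<Sum>s\<in>UNIV. sd pol' d0 t s * (\<Sum>a\<in>JA. pol' s a * Adv P JA g pol r s a))
        = (\<Sum>s\<in>UNIV. sd pol' d0 t s * rpi pol' r s) + g * (\<Sum>s\<in>UNIV. sd pol' d0 t s * (\<Sum>u\<in>UNIV. step pol' (delta s) u * V pol r u))
          - W t"
      by (simp add: adv_avg[OF pol pol'] W_def algebra_simps sum.distrib sum_subtractf sum_distrib_left)
    then have "(\<Sum>s\<in>UNIV. sd pol' d0 t s * (\<Sum>a\<in>JA. pol' s a * Adv P JA g pol r s a))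
        = er pol' r d0 t + g * W (Suc t) - W t"
      by (simp only: WS er_def2)
    then have "g ^ t * (\<Sum>s\<in>UNIV. sd pol' d0 t s * (\<Sum>a\<in>JA. pol' s a * Adv P JA g pol r s a))
        = g ^ t * (er pol' r d0 t + g * W (Suc t) - W t)" by (simp only:)
    also have "\<dots> = g ^ t * er pol' r d0 t + (g ^ Suc t * W (Suc t) - g ^ t * W t)"
      by (simp add: algebra_simps power_Suc)
    finally show ?thesis .
  qed
  obtain B where B: "\<And>s. \<bar>V pol r s\<bar> \<le> B" using finite_bound by blast
  have Wb: "\<bar>W t\<bar> \<le> B" for t
    unfolding W_def by (rule avg_bound[OF sd_dist[OF pol' d0] B])
  have "(\<lambda>t. g ^ t * W t) \<longlonglongrightarrow> 0" by (rule tends_zero_bounded[OF Wb])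
  then have tel: "(\<lambda>t. g ^ Suc t * W (Suc t) - g ^ t * W t) sums (0 - g ^ 0 * W 0)"
    by (rule telescope_sums)
  have W0: "W 0 = (\<Sum>t. g ^ t * er pol r d0 t)"
    using comb_sums[OF pol, of r d0] by (simp add: W_def sums_iff mult.commute)
  have "(\<lambda>t. g ^ t * er pol' r d0 t + (g ^ Suc t * W (Suc t) - g ^ t * W t))
         sums ((\<Sum>t. g ^ t * er pol' r d0 t) + (0 - g ^ 0 * W 0))"
    by (intro sums_add summable_sums[OF summable_er[OF pol' d0]] tel)
  then show ?thesis by (simp add: trm W0)
qed

lemma visit_sums:
  assumes pol: "is_policy JA pol" and d0: "isdist d0"
  shows "(\<lambda>t. g ^ t * (\<Sum>s\<in>UNIV. sd pol d0 t s * X s)) sums (\<Sum>s\<in>UNIV. visit P JA g d0 pol s * X s)"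
proof -
  have "(\<lambda>t. g ^ t * sd pol d0 t s) sums visit P JA g d0 pol s" for s
  proof -
    have "\<bar>sd pol d0 t s\<bar> \<le> 1" for t
      using sd_dist[OF pol d0, of t] member_le_sum[of s UNIV "sd pol d0 t"]
      by (auto simp: isdist_def)
    then show ?thesis unfolding visit_def by (intro summable_sums summable_bounded_geo)
  qed
  then have "(\<lambda>t. \<Sum>s\<in>UNIV. g ^ t * sd pol d0 t s * X s) sums (\<Sum>s\<in>UNIV. visit P JA g d0 pol s * X s)"
    by (intro sums_sum sums_mult2)
  then show ?thesis by (simp add: sum_distrib_left mult.assoc)
qed


lemma dist_diff:
  assumes pol: "is_policy JA pol" and pol': "is_policy JA pol'" and d0: "isdist d0"
    and c: "\<And>s. (\<Sum>a\<in>JA. \<bar>pol' s a - pol s a\<bar>) \<le> c"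
  shows "(\<Sum>s\<in>UNIV. \<bar>sd pol' d0 t s - sd pol d0 t s\<bar>) \<le> c * real t"
proof (induction t)
  case 0 then show ?case by simp
next
  case (Suc t)
  define m' where "m' = sd pol' d0 t"
  define m where "m = sd pol d0 t"
  have m'd: "isdist m'" unfolding m'_def by (rule sd_dist[OF pol' d0])
  have md: "isdist m" unfolding m_def by (rule sd_dist[OF pol d0])
  define F where "F s a u = (\<bar>m' s - m s\<bar> * pol' s a + m s * \<bar>pol' s a - pol s a\<bar>) * P s a u" for s a u
  have pt: "\<bar>sd pol' d0 (Suc t) u - sd pol d0 (Suc t) u\<bar> \<le> (\<Sum>s\<in>UNIV. \<Sum>a\<in>JA. F s a u)" for u
  proof -
    have "sd pol' d0 (Suc t) u - sd pol d0 (Suc t) u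
        = (\<Sum>s\<in>UNIV. \<Sum>a\<in>JA. (m' s - m s) * pol' s a * P s a u + m s * (pol' s a - pol s a) * P s a u)"
      by (simp add: m'_def m_def sum_subtractf[symmetric] algebra_simps)
    also have "\<bar>\<dots>\<bar> \<le> (\<Sum>s\<in>UNIV. \<Sum>a\<in>JA. \<bar>(m' s - m s) * pol' s a * P s a u + m s * (pol' s a - pol s a) * P s a u\<bar>)"
      by (rule order_trans[OF sum_abs sum_mono[OF sum_abs]])
    also have "\<dots> \<le> (\<Sum>s\<in>UNIV. \<Sum>a\<in>JA. F s a u)"
    proof (intro sum_mono)
      fix s a assume a: "a \<in> JA"
      have p'0: "0 \<le> pol' s a" using pol' a by (simp add: is_policy_def)
      have P0: "0 \<le> P s a u" using Pnn a by simp
      have m0: "0 \<le> m s" using md by (simp add: isdist_def)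
      have "\<bar>(m' s - m s) * pol' s a * P s a u + m s * (pol' s a - pol s a) * P s a u\<bar>
          \<le> \<bar>(m' s - m s) * pol' s a * P s a u\<bar> + \<bar>m s * (pol' s a - pol s a) * P s a u\<bar>"
        by (rule abs_triangle_ineq)
      also have "\<dots> = F s a u" using p'0 P0 m0 by (simp add: F_def abs_mult distrib_right)
      finally show "\<bar>(m' s - m s) * pol' s a * P s a u + m s * (pol' s a - pol s a) * P s a u\<bar> \<le> F s a u" .
    qed
    finally show ?thesis .
  qed
  have "(\<Sum>u\<in>UNIV. \<bar>sd pol' d0 (Suc t) u - sd pol d0 (Suc t) u\<bar>) \<le> (\<Sum>u\<in>UNIV. \<Sum>s\<in>UNIV. \<Sum>a\<in>JA. F s a u)"
    by (intro sum_mono pt)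
  also have "\<dots> = (\<Sum>s\<in>UNIV. \<Sum>u\<in>UNIV. \<Sum>a\<in>JA. F s a u)" by (rule sum.swap)
  also have "\<dots> = (\<Sum>s\<in>UNIV. \<Sum>a\<in>JA. \<Sum>u\<in>UNIV. F s a u)" by (rule sum.cong[OF refl], rule sum.swap)
  also have "\<dots> = (\<Sum>s\<in>UNIV. \<Sum>a\<in>JA. (\<bar>m' s - m s\<bar> * pol' s a + m s * \<bar>pol' s a - pol s a\<bar>))"
    by (simp add: F_def Psum flip: sum_distrib_left)
  also have "\<dots> = (\<Sum>s\<in>UNIV. \<bar>m' s - m s\<bar>) + (\<Sum>s\<in>UNIV. m s * (\<Sum>a\<in>JA. \<bar>pol' s a - pol s a\<bar>))"
    using pol' by (simp add: sum.distrib is_policy_def flip: sum_distrib_left)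
  also have "\<dots> \<le> c * real t + (\<Sum>s\<in>UNIV. m s * c)"
    using Suc md c by (intro add_mono sum_mono mult_left_mono) (auto simp: m'_def m_def isdist_def)
  also have "\<dots> = c * real (Suc t)"
  proof -
    have "(\<Sum>s\<in>UNIV. m s * c) = c" using md by (simp add: isdist_def flip: sum_distrib_right)
    then show ?thesis by (simp add: algebra_simps)
  qed
  finally show ?case .
qed

lemma nsums: "(\<lambda>n. real n * g ^ n) sums (g / (1 - g)^2)"
proof -
  have "(\<lambda>n. of_nat (Suc n) * g ^ n) sums (1 / (1 - g)^2)"
    using g0 g1 by (intro geometric_deriv_sums) auto
  then have "(\<lambda>n. g * (of_nat (Suc n) * g ^ n)) sums (g * (1 / (1 - g)^2))" by (rule sums_mult)
  then have "(\<lambda>n. real (Suc n) * g ^ Suc n) sums (g / (1 - g)^2)" by (simp add: algebra_simps)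
  then show ?thesis by (subst (asm) sums_Suc_iff) simp
qed

lemma main_mdp:
  fixes I :: "'i set" and R :: "'i \<Rightarrow> 's \<Rightarrow> 'b \<Rightarrow> real"
  assumes pol: "is_policy JA pol" and pol': "is_policy JA pol'" and d0: "isdist d0"
    and finI: "finite I" and JAne: "JA \<noteq> {}"
    and c: "\<And>s. (\<Sum>a\<in>JA. \<bar>pol' s a - pol s a\<bar>) \<le> c"
    and eps: "\<And>s a. a \<in> JA \<Longrightarrow> \<bar>\<Sum>i\<in>I. Adv P JA g pol (R i) s a\<bar> \<le> eps"
  shows "(\<Sum>i\<in>I. (\<Sum>t. g ^ t * er pol' (R i) d0 t) - (\<Sum>t. g ^ t * er pol (R i) d0 t))
      \<ge> (\<Sum>i\<in>I. \<Sum>s\<in>UNIV. visit P JA g d0 pol s * (\<Sum>a\<in>JA. pol' s a * Adv P JA g pol (R i) s a))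
         - g / (1 - g)^2 * (c * c * eps)"
proof -
  define Ab where "Ab s = (\<Sum>i\<in>I. \<Sum>a\<in>JA. pol' s a * Adv P JA g pol (R i) s a)" for s
  define D where "D = (\<Sum>i\<in>I. (\<Sum>t. g ^ t * er pol' (R i) d0 t) - (\<Sum>t. g ^ t * er pol (R i) d0 t))"
  define Z where "Z = (\<Sum>i\<in>I. \<Sum>s\<in>UNIV. visit P JA g d0 pol s * (\<Sum>a\<in>JA. pol' s a * Adv P JA g pol (R i) s a))"
  have S1: "(\<lambda>t. g ^ t * (\<Sum>s\<in>UNIV. sd pol' d0 t s * Ab s)) sums D"
  proof -
    have "(\<lambda>t. \<Sum>i\<in>I. g ^ t * (\<Sum>s\<in>UNIV. sd pol' d0 t s * (\<Sum>a\<in>JA. pol' s a * Adv P JA g pol (R i) s a))) sums D"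
      unfolding D_def by (intro sums_sum pdl[OF pol pol' d0])
    moreover have "(\<Sum>i\<in>I. g ^ t * (\<Sum>s\<in>UNIV. sd pol' d0 t s * (\<Sum>a\<in>JA. pol' s a * Adv P JA g pol (R i) s a)))
        = g ^ t * (\<Sum>s\<in>UNIV. sd pol' d0 t s * Ab s)" for t
    proof -
      have "(\<Sum>i\<in>I. g ^ t * (\<Sum>s\<in>UNIV. sd pol' d0 t s * (\<Sum>a\<in>JA. pol' s a * Adv P JA g pol (R i) s a)))
        = g ^ t * (\<Sum>i\<in>I. \<Sum>s\<in>UNIV. sd pol' d0 t s * (\<Sum>a\<in>JA. pol' s a * Adv P JA g pol (R i) s a))"
        by (rule sum_distrib_left[symmetric])
      also have "(\<Sum>i\<in>I. \<Sum>s\<in>UNIV. sd pol' d0 t s * (\<Sum>a\<in>JA. pol' s a * Adv P JA g pol (R i) s a))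
          = (\<Sum>s\<in>UNIV. \<Sum>i\<in>I. sd pol' d0 t s * (\<Sum>a\<in>JA. pol' s a * Adv P JA g pol (R i) s a))"
        by (rule sum.swap)
      also have "\<dots> = (\<Sum>s\<in>UNIV. sd pol' d0 t s * Ab s)"
        by (simp only: Ab_def sum_distrib_left)
      finally show ?thesis .
    qed
    ultimately show ?thesis by simp
  qed
  have S2: "(\<lambda>t. g ^ t * (\<Sum>s\<in>UNIV. sd pol d0 t s * Ab s)) sums Z"
  proof -
    have "(\<Sum>s\<in>UNIV. visit P JA g d0 pol s * Ab s) = Z"
    proof -
      have "(\<Sum>s\<in>UNIV. visit P JA g d0 pol s * Ab s)
         = (\<Sum>s\<in>UNIV. \<Sum>i\<in>I. visit P JA g d0 pol s * (\<Sum>a\<in>JA. pol' s a * Adv P JA g pol (R i) s a))"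
        by (simp add: Ab_def sum_distrib_left)
      also have "\<dots> = Z" unfolding Z_def by (rule sum.swap)
      finally show ?thesis .
    qed
    then show ?thesis using visit_sums[OF pol d0, of Ab] by simp
  qed
  have Abb: "\<bar>Ab s\<bar> \<le> c * eps" for s
  proof -
    have z: "(\<Sum>a\<in>JA. pol s a * (\<Sum>i\<in>I. Adv P JA g pol (R i) s a)) = 0"
    proof -
      have "(\<Sum>a\<in>JA. pol s a * (\<Sum>i\<in>I. Adv P JA g pol (R i) s a))
          = (\<Sum>a\<in>JA. \<Sum>i\<in>I. pol s a * Adv P JA g pol (R i) s a)" by (simp add: sum_distrib_left)
      also have "\<dots> = (\<Sum>i\<in>I. \<Sum>a\<in>JA. pol s a * Adv P JA g pol (R i) s a)" by (rule sum.swap)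
      also have "\<dots> = 0" by (simp add: adv_avg_zero[OF pol])
      finally show ?thesis .
    qed
    have "Ab s = (\<Sum>a\<in>JA. pol' s a * (\<Sum>i\<in>I. Adv P JA g pol (R i) s a))"
      unfolding Ab_def by (subst sum.swap) (simp add: sum_distrib_left)
    also have "\<dots> = (\<Sum>a\<in>JA. (pol' s a - pol s a) * (\<Sum>i\<in>I. Adv P JA g pol (R i) s a))"
      using z by (simp add: left_diff_distrib sum_subtractf)
    finally have "\<bar>Ab s\<bar> \<le> (\<Sum>a\<in>JA. \<bar>(pol' s a - pol s a) * (\<Sum>i\<in>I. Adv P JA g pol (R i) s a)\<bar>)"
      by (simp add: sum_abs)
    also have "\<dots> \<le> (\<Sum>a\<in>JA. \<bar>pol' s a - pol s a\<bar> * eps)"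
      using eps by (intro sum_mono) (auto simp: abs_mult intro: mult_left_mono)
    also have "\<dots> \<le> c * eps"
    proof -
      obtain a0 where "a0 \<in> JA" using JAne by blast
      then have "0 \<le> eps" using eps[of a0 s] by linarith
      then show ?thesis using c[of s] by (simp add: mult_right_mono flip: sum_distrib_right)
    qed
    finally show ?thesis .
  qed
  have tb: "g ^ t * (\<Sum>s\<in>UNIV. sd pol' d0 t s * Ab s) - g ^ t * (\<Sum>s\<in>UNIV. sd pol d0 t s * Ab s)
      \<ge> - (real t * g ^ t * (c * c * eps))" for t
  proof -
    have "\<bar>\<Sum>s\<in>UNIV. (sd pol' d0 t s - sd pol d0 t s) * Ab s\<bar> \<le> (\<Sum>s\<in>UNIV. \<bar>sd pol' d0 t s - sd pol d0 t s\<bar> * (c * eps))"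
      by (rule order_trans[OF sum_abs], rule sum_mono) (auto simp: abs_mult intro: mult_left_mono Abb)
    also have "\<dots> \<le> c * real t * (c * eps)"
    proof -
      have "0 \<le> c * eps" using Abb[of undefined] by linarith
      then show ?thesis using dist_diff[OF pol pol' d0 c, of t]
        by (simp add: mult_right_mono flip: sum_distrib_right)
    qed
    finally have "\<bar>\<Sum>s\<in>UNIV. (sd pol' d0 t s - sd pol d0 t s) * Ab s\<bar> \<le> c * real t * (c * eps)" .
    moreover have "(\<Sum>s\<in>UNIV. (sd pol' d0 t s - sd pol d0 t s) * Ab s)
        = (\<Sum>s\<in>UNIV. sd pol' d0 t s * Ab s) - (\<Sum>s\<in>UNIV. sd pol d0 t s * Ab s)"
      by (simp add: left_diff_distrib sum_subtractf)
    ultimately have "(\<Sum>s\<in>UNIV. sd pol' d0 t s * Ab s) - (\<Sum>s\<in>UNIV. sd pol d0 t s * Ab s) \<ge> - (c * real t * (c * eps))"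
      by linarith
    then have "g ^ t * ((\<Sum>s\<in>UNIV. sd pol' d0 t s * Ab s) - (\<Sum>s\<in>UNIV. sd pol d0 t s * Ab s)) \<ge> g ^ t * (- (c * real t * (c * eps)))"
      using g0 by (intro mult_left_mono) auto
    then show ?thesis by (simp add: right_diff_distrib algebra_simps)
  qed
  have S3: "(\<lambda>t. - (real t * g ^ t * (c * c * eps))) sums (- (g / (1 - g)^2 * (c * c * eps)))"
    by (intro sums_minus sums_mult2 nsums)
  have "- (g / (1 - g)^2 * (c * c * eps)) \<le> D - Z"
    by (rule sums_le[OF _ S3 sums_diff[OF S1 S2]]) (use tb in auto)
  then show ?thesis unfolding D_def Z_def by simp
qed

end

theorem theorem1:
  fixes Act :: "'i::finite \<Rightarrow> 'a set"
    and P :: "'s::finite \<Rightarrow> ('i \<Rightarrow> 'a) \<Rightarrow> 's \<Rightarrow> real"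
    and R :: "'i \<Rightarrow> 's \<Rightarrow> ('i \<Rightarrow> 'a) \<Rightarrow> real"
    and g :: real
    and d0 :: "'s \<Rightarrow> real"
    and pold pnew :: "'i \<Rightarrow> 's \<Rightarrow> 'a \<Rightarrow> real"
    and pt :: "'i \<Rightarrow> 'i \<Rightarrow> 's \<Rightarrow> 'a \<Rightarrow> real"
  defines "JA \<equiv> jointActs Act"
    and "piold \<equiv> prod_policy pold"
    and "pinew \<equiv> prod_policy pnew"
    and "Pit \<equiv> (\<lambda>i. prod_policy (pt i))"
  assumes Act_fin: "\<And>i. finite (Act i)"
    and Act_ne: "\<And>i. Act i \<noteq> {}"
    and g_pos: "0 < g" and g_lt1: "g < 1"
    and d0_nonneg: "\<And>s. 0 \<le> d0 s" and d0_sum: "(\<Sum>s\<in>UNIV. d0 s) = 1"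
    and P_nonneg: "\<And>s a s'. a \<in> JA \<Longrightarrow> 0 \<le> P s a s'"
    and P_sum: "\<And>s a. a \<in> JA \<Longrightarrow> (\<Sum>s'\<in>UNIV. P s a s') = 1"
    and pold_pol: "\<And>i. is_policy (Act i) (pold i)"
    and pnew_pol: "\<And>i. is_policy (Act i) (pnew i)"
    and pt_pol: "\<And>i j. is_policy (Act j) (pt i j)"
    and pt_diag: "\<And>i. pt i i = pnew i"
    and abs_cont: "\<And>i s a. a \<in> Act i \<Longrightarrow> 0 < pold i s a \<Longrightarrow> 0 < pnew i s a"
  shows "eta P JA g d0 R pinew \<ge>
           eta P JA g d0 R piold + zeta P JA g d0 R piold Pit
           - 4 * g * Max ((\<lambda>(s, a). \<bar>\<Sum>i\<in>UNIV. Adv P JA g piold (R i) s a\<bar>) ` (UNIV \<times> JA)) / (1 - g)^2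
               * (\<Sum>i\<in>UNIV. KLmax (Act i) (pold i) (pnew i))
           - (\<Sum>i\<in>UNIV. 1/2 * Max ((\<lambda>(s, a). \<bar>Adv P JA g piold (R i) s a\<bar>) ` (UNIV \<times> JA))
               * real (card JA) * (\<Sum>s\<in>UNIV. (visit P JA g d0 piold s)^2))
           - (\<Sum>i\<in>UNIV. 1/2 * Max ((\<lambda>(s, a). \<bar>Adv P JA g piold (R i) s a\<bar>) ` (UNIV \<times> JA))
                * (\<Sum>s\<in>UNIV. \<Sum>a\<in>JA. (Pit i s a - pinew s a)^2))"
proof -
  have JA_eq: "JA = PiE UNIV Act"
    unfolding JA_def jointActs_def by (auto simp: PiE_UNIV_domain Pi_def)
  have finJA: "finite JA" unfolding JA_eq using Act_fin by (intro finite_PiE) auto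
  have JAne: "JA \<noteq> {}" unfolding JA_eq using Act_ne by (simp add: PiE_eq_empty_iff)
  interpret M: mdp P JA g
    by unfold_locales (use finJA P_nonneg P_sum g_pos g_lt1 in auto)
  have prodpol: "is_policy JA (prod_policy q)" if q: "\<And>i. is_policy (Act i) (q i)" for q
    unfolding is_policy_def
  proof (intro allI conjI ballI)
    fix s a assume "a \<in> JA"
    then have "a i \<in> Act i" for i unfolding JA_eq by auto
    then show "0 \<le> prod_policy q s a" unfolding prod_policy_def
      using q by (intro prod_nonneg) (auto simp: is_policy_def)
  next
    fix s
    have "(\<Sum>a\<in>JA. prod_policy q s a) = (\<Prod>i\<in>UNIV. \<Sum>x\<in>Act i. q i s x)"
      unfolding JA_eq prod_policy_def by (rule prod_sum_PiE[symmetric]) (auto simp: Act_fin)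
    also have "\<dots> = 1" using q by (simp add: is_policy_def)
    finally show "(\<Sum>a\<in>JA. prod_policy q s a) = 1" .
  qed
  have polo: "is_policy JA piold" unfolding piold_def by (rule prodpol[OF pold_pol])
  have poln: "is_policy JA pinew" unfolding pinew_def by (rule prodpol[OF pnew_pol])
  have d0d: "isdist d0" using d0_nonneg d0_sum by (simp add: isdist_def)
  define K where "K = (\<Sum>i\<in>UNIV. KLmax (Act i) (pold i) (pnew i))"
  have KLle: "KL (Act i) (pold i s) (pnew i s) \<le> KLmax (Act i) (pold i) (pnew i)" for i s
    unfolding KLmax_def by (rule Max_ge) auto
  have tv2: "(\<Sum>a\<in>JA. \<bar>pinew s a - piold s a\<bar>)\<^sup>2 \<le> 4 * K" for s
  proof -
    have "(\<Sum>a\<in>JA. \<bar>pinew s a - piold s a\<bar>)\<^sup>2 \<le> 4 * (\<Sum>i\<in>UNIV. KL (Act i) (pold i s) (pnew i s))"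
      unfolding JA_eq pinew_def piold_def prod_policy_def
      by (rule tv_kl[where p = "\<lambda>i. pold i s" and q = "\<lambda>i. pnew i s"])
         (use Act_fin pold_pol pnew_pol abs_cont in \<open>auto simp: is_policy_def\<close>)
    also have "\<dots> \<le> 4 * K" unfolding K_def by (intro mult_left_mono sum_mono KLle) auto
    finally show ?thesis .
  qed
  have K0: "0 \<le> K"
  proof -
    have "0 \<le> (\<Sum>a\<in>JA. \<bar>pinew undefined a - piold undefined a\<bar>)\<^sup>2" by simp
    then show ?thesis using tv2[of undefined] by linarith
  qed
  have tv: "(\<Sum>a\<in>JA. \<bar>pinew s a - piold s a\<bar>) \<le> 2 * sqrt K" for s
  proof -
    have "(\<Sum>a\<in>JA. \<bar>pinew s a - piold s a\<bar>) \<le> sqrt (4 * K)" by (rule real_le_rsqrt[OF tv2])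
    also have "sqrt (4 * K) = 2 * sqrt K" by (simp add: real_sqrt_mult)
    finally show ?thesis .
  qed
  define eps where "eps = Max ((\<lambda>(s, a). \<bar>\<Sum>i\<in>UNIV. Adv P JA g piold (R i) s a\<bar>) ` (UNIV \<times> JA))"
  have epsb: "\<bar>\<Sum>i\<in>UNIV. Adv P JA g piold (R i) s a\<bar> \<le> eps" if "a \<in> JA" for s a
    unfolding eps_def using that finJA by (intro Max_ge) force+
  have main: "(\<Sum>i\<in>UNIV. (\<Sum>t. g ^ t * exp_reward P JA pinew (R i) d0 t) - (\<Sum>t. g ^ t * exp_reward P JA piold (R i) d0 t))
      \<ge> (\<Sum>i\<in>UNIV. \<Sum>s\<in>UNIV. visit P JA g d0 piold s * (\<Sum>a\<in>JA. pinew s a * Adv P JA g piold (R i) s a))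
         - g / (1 - g)^2 * (2 * sqrt K * (2 * sqrt K) * eps)"
    by (rule M.main_mdp[OF polo poln d0d _ JAne tv epsb]) auto
  have eta_diff: "eta P JA g d0 R pinew - eta P JA g d0 R piold
     = (\<Sum>i\<in>UNIV. (\<Sum>t. g ^ t * exp_reward P JA pinew (R i) d0 t) - (\<Sum>t. g ^ t * exp_reward P JA piold (R i) d0 t))"
    by (simp add: eta_def sum_subtractf)
  have cterm: "g / (1 - g)^2 * (2 * sqrt K * (2 * sqrt K) * eps)
     = 4 * g * eps / (1 - g)^2 * K"
    using K0 by (simp add: field_simps)
  define m where "m i = Max ((\<lambda>(s, a). \<bar>Adv P JA g piold (R i) s a\<bar>) ` (UNIV \<times> JA))" for i
  have mb: "\<bar>Adv P JA g piold (R i) s a\<bar> \<le> m i" if "a \<in> JA" for i s a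
    unfolding m_def using that finJA by (intro Max_ge) force+
  have q: "(\<Sum>s\<in>UNIV. visit P JA g d0 piold s * (\<Sum>a\<in>JA. pinew s a * Adv P JA g piold (R i) s a))
          - (\<Sum>s\<in>UNIV. visit P JA g d0 piold s * (\<Sum>a\<in>JA. Pit i s a * Adv P JA g piold (R i) s a))
     \<ge> - (1/2 * m i * real (card JA) * (\<Sum>s\<in>UNIV. (visit P JA g d0 piold s)^2)
          + 1/2 * m i * (\<Sum>s\<in>UNIV. \<Sum>a\<in>JA. (Pit i s a - pinew s a)^2))" for i
    by (rule quad_bound[OF finJA mb])
  have qs: "(\<Sum>i\<in>UNIV. \<Sum>s\<in>UNIV. visit P JA g d0 piold s * (\<Sum>a\<in>JA. pinew s a * Adv P JA g piold (R i) s a))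
          - zeta P JA g d0 R piold Pit
     \<ge> - ((\<Sum>i\<in>UNIV. 1/2 * m i * real (card JA) * (\<Sum>s\<in>UNIV. (visit P JA g d0 piold s)^2))
          + (\<Sum>i\<in>UNIV. 1/2 * m i * (\<Sum>s\<in>UNIV. \<Sum>a\<in>JA. (Pit i s a - pinew s a)^2)))"
  proof -
    have "(\<Sum>i\<in>UNIV. - (1/2 * m i * real (card JA) * (\<Sum>s\<in>UNIV. (visit P JA g d0 piold s)^2)
          + 1/2 * m i * (\<Sum>s\<in>UNIV. \<Sum>a\<in>JA. (Pit i s a - pinew s a)^2)))
      \<le> (\<Sum>i\<in>UNIV. (\<Sum>s\<in>UNIV. visit P JA g d0 piold s * (\<Sum>a\<in>JA. pinew s a * Adv P JA g piold (R i) s a))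
          - (\<Sum>s\<in>UNIV. visit P JA g d0 piold s * (\<Sum>a\<in>JA. Pit i s a * Adv P JA g piold (R i) s a)))"
      by (intro sum_mono q)
    then show ?thesis by (simp add: zeta_def sum_subtractf sum_negf sum.distrib)
  qed
  show ?thesis
    using main eta_diff cterm qs unfolding eps_def m_def K_def by linarith
qed

end
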